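(* Let $(V,\{\nu_n\})$ be an $L^\infty$-MOS and $S\subseteq V$ an $L^\infty$-MOS ideal. Then $V/S$, with involution $(x+S)^*=x^*+S$ and with $M_n(V/S)_{sa}$ identified with $M_n(V)_{sa}/M_n(S)_{sa}$, together with the maps \[q_n(A+M_n(S)_{sa})=\inf\{\nu_n(B): B\in A+M_n(S)_{sa}\},\qquad A\in M_n(V)_{sa},\] is an $L^\infty$-MOS; in particular each $q_n$ is a proper gauge.
   Context: An $L^\infty$-MOS is a complex $*$-vector space $V$ ($M_n(V)$ with $(x_{ij})^*=(x_{ji}^* )$, self-adjoint part $M_n(V)_{sa}$) with proper gauges $\nu_n:M_n(V)_{sa}\to[0,\infty)$ (subadditive, positively homogeneous, $\nu_n(A)=\nu_n(-A)=0\Rightarrow A=0$) such that $\nu_k(X^*AX)\le\|X\|^2\nu_n(A)$ for scalar $X\in M_{n,k}$ and $\nu_{n+k}(A\oplus B)=\max\{\nu_n(A),\nu_k(B)\}$. For a gauged real vector space $(E,\nu)$, a subspace $T$ is a gauge ideal if whenever $x\in E$ and there are sequences $(a_j),(b_j)\subseteq T$ with $\nu(x-a_j)\to0$ and $\nu(b_j-x)\to0$, then $x\in T$. A self-adjoint subspace $S\subseteq V$ is an $L^\infty$-MOS ideal if $S_{sa}=S\cap V_{sa}$ is a gauge ideal of $(V_{sa},\nu_1)$. *)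

theory Defs
  imports Complex_Main
begin

text \<open>Matrices over V are represented as functions nat => nat => 'v; an n x n matrix
  is one whose entries vanish outside the index block {0..<n} x {0..<n}.\<close>

definition mats :: "nat \<Rightarrow> (nat \<Rightarrow> nat \<Rightarrow> 'v::zero) set" where
  "mats n = {A. \<forall>i j. \<not> (i < n \<and> j < n) \<longrightarrow> A i j = 0}"

definition star_space :: "(complex \<Rightarrow> 'v::real_vector \<Rightarrow> 'v) \<Rightarrow> ('v \<Rightarrow> 'v) \<Rightarrow> bool" where
  "star_space sc st \<longleftrightarrow>
     module sc \<and> (\<forall>(r::real) x. sc (complex_of_real r) x = r *\<^sub>R x) \<and>
     (\<forall>x y. st (x + y) = st x + st y) \<and>
     (\<forall>c x. st (sc c x) = sc (cnj c) (st x)) \<and>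
     (\<forall>x. st (st x) = x)"

definition mstar :: "('v \<Rightarrow> 'v) \<Rightarrow> (nat \<Rightarrow> nat \<Rightarrow> 'v) \<Rightarrow> nat \<Rightarrow> nat \<Rightarrow> 'v" where
  "mstar st A = (\<lambda>i j. st (A j i))"

definition msa :: "('v::zero \<Rightarrow> 'v) \<Rightarrow> nat \<Rightarrow> (nat \<Rightarrow> nat \<Rightarrow> 'v) set" where
  "msa st n = {A. A \<in> mats n \<and> mstar st A = A}"

definition mats_in :: "'v::zero set \<Rightarrow> nat \<Rightarrow> (nat \<Rightarrow> nat \<Rightarrow> 'v) set" where
  "mats_in N n = {A. A \<in> mats n \<and> (\<forall>i j. A i j \<in> N)}"

definition congr :: "(complex \<Rightarrow> 'v::real_vector \<Rightarrow> 'v) \<Rightarrow> nat \<Rightarrow> nat \<Rightarrow> (nat \<Rightarrow> nat \<Rightarrow> complex) \<Rightarrow> (nat \<Rightarrow> nat \<Rightarrow> 'v)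
                     \<Rightarrow> nat \<Rightarrow> nat \<Rightarrow> 'v" where
  "congr sc n k X A = (\<lambda>i j. if i < k \<and> j < k
      then (\<Sum>p<n. \<Sum>q<n. sc (cnj (X p i) * X q j) (A p q)) else 0)"

definition vnorm :: "nat \<Rightarrow> (nat \<Rightarrow> complex) \<Rightarrow> real" where
  "vnorm k v = sqrt (\<Sum>j<k. (cmod (v j))\<^sup>2)"

definition opnorm :: "nat \<Rightarrow> nat \<Rightarrow> (nat \<Rightarrow> nat \<Rightarrow> complex) \<Rightarrow> real" where
  "opnorm n k X = Sup {vnorm n (\<lambda>i. \<Sum>j<k. X i j * v j) | v. vnorm k v \<le> 1}"

definition dsum :: "nat \<Rightarrow> nat \<Rightarrow> (nat \<Rightarrow> nat \<Rightarrow> 'v::zero) \<Rightarrow> (nat \<Rightarrow> nat \<Rightarrow> 'v)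
                    \<Rightarrow> nat \<Rightarrow> nat \<Rightarrow> 'v" where
  "dsum n k A B = (\<lambda>i j. if i < n \<and> j < n then A i j
      else if n \<le> i \<and> n \<le> j \<and> i < n + k \<and> j < n + k then B (i - n) (j - n) else 0)"

definition sa_subspace :: "(complex \<Rightarrow> 'v::real_vector \<Rightarrow> 'v) \<Rightarrow> ('v \<Rightarrow> 'v) \<Rightarrow> 'v set \<Rightarrow> bool" where
  "sa_subspace sc st N \<longleftrightarrow> 0 \<in> N \<and> (\<forall>x\<in>N. \<forall>y\<in>N. x + y \<in> N)
     \<and> (\<forall>c. \<forall>x\<in>N. sc c x \<in> N) \<and> (\<forall>x\<in>N. st x \<in> N)"

text \<open>L^infty-MOS structure on the quotient V/N, presented through representatives:
  M_n(V/N)_sa is identified with M_n(V)_sa / M_n(N)_sa, so each gauge nu_n is a function on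
  M_n(V)_sa that is constant on cosets of M_n(N)_sa, and properness is modulo M_n(N).\<close>
definition LinfMOS_mod ::
  "(complex \<Rightarrow> 'v::real_vector \<Rightarrow> 'v) \<Rightarrow> ('v \<Rightarrow> 'v) \<Rightarrow> 'v set \<Rightarrow> (nat \<Rightarrow> (nat \<Rightarrow> nat \<Rightarrow> 'v) \<Rightarrow> real) \<Rightarrow> bool" where
  "LinfMOS_mod sc st N \<nu> \<longleftrightarrow>
     star_space sc st \<and> sa_subspace sc st N \<and>
     (\<forall>n\<ge>1. \<forall>A\<in>msa st n. \<forall>B\<in>msa st n. (\<lambda>i j. A i j - B i j) \<in> mats_in N n \<longrightarrow> \<nu> n A = \<nu> n B) \<and>
     (\<forall>n\<ge>1. \<forall>A\<in>msa st n. 0 \<le> \<nu> n A) \<and>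
     (\<forall>n\<ge>1. \<forall>A\<in>msa st n. \<forall>B\<in>msa st n. \<nu> n (\<lambda>i j. A i j + B i j) \<le> \<nu> n A + \<nu> n B) \<and>
     (\<forall>n\<ge>1. \<forall>A\<in>msa st n. \<forall>t::real. t \<ge> 0 \<longrightarrow> \<nu> n (\<lambda>i j. t *\<^sub>R A i j) = t * \<nu> n A) \<and>
     (\<forall>n\<ge>1. \<forall>A\<in>msa st n. \<nu> n A = 0 \<and> \<nu> n (\<lambda>i j. - A i j) = 0 \<longrightarrow> A \<in> mats_in N n) \<and>
     (\<forall>n\<ge>1. \<forall>k\<ge>1. \<forall>X. \<forall>A\<in>msa st n.
         \<nu> k (congr sc n k X A) \<le> (opnorm n k X)\<^sup>2 * \<nu> n A) \<and>
     (\<forall>n\<ge>1. \<forall>k\<ge>1. \<forall>A\<in>msa st n. \<forall>B\<in>msa st k.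
         \<nu> (n + k) (dsum n k A B) = max (\<nu> n A) (\<nu> k B))"

definition LinfMOS ::
  "(complex \<Rightarrow> 'v::real_vector \<Rightarrow> 'v) \<Rightarrow> ('v \<Rightarrow> 'v) \<Rightarrow> (nat \<Rightarrow> (nat \<Rightarrow> nat \<Rightarrow> 'v) \<Rightarrow> real) \<Rightarrow> bool" where
  "LinfMOS sc st \<nu> \<longleftrightarrow> LinfMOS_mod sc st {0} \<nu>"

definition gauge_ideal :: "'e::real_vector set \<Rightarrow> ('e \<Rightarrow> real) \<Rightarrow> 'e set \<Rightarrow> bool" where
  "gauge_ideal E g T \<longleftrightarrow>
     (\<forall>x\<in>E. (\<exists>a b. (\<forall>j. a j \<in> T \<and> b j \<in> T) \<and>
                   (\<lambda>j. g (x - a j)) \<longlonglongrightarrow> 0 \<and> (\<lambda>j. g (b j - x)) \<longlonglongrightarrow> 0) \<longrightarrow> x \<in> T)"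

definition emb1 :: "'v::zero \<Rightarrow> nat \<Rightarrow> nat \<Rightarrow> 'v" where
  "emb1 x = (\<lambda>i j. if i = 0 \<and> j = 0 then x else 0)"

definition LinfMOS_ideal ::
  "(complex \<Rightarrow> 'v::real_vector \<Rightarrow> 'v) \<Rightarrow> ('v \<Rightarrow> 'v) \<Rightarrow> (nat \<Rightarrow> (nat \<Rightarrow> nat \<Rightarrow> 'v) \<Rightarrow> real) \<Rightarrow> 'v set \<Rightarrow> bool" where
  "LinfMOS_ideal sc st \<nu> S \<longleftrightarrow> sa_subspace sc st S \<and>
     gauge_ideal {x. st x = x} (\<lambda>x. \<nu> 1 (emb1 x)) (S \<inter> {x. st x = x})"

definition quot_gauge ::
  "('v::real_vector \<Rightarrow> 'v) \<Rightarrow> (nat \<Rightarrow> (nat \<Rightarrow> nat \<Rightarrow> 'v) \<Rightarrow> real) \<Rightarrow> 'v set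
     \<Rightarrow> nat \<Rightarrow> (nat \<Rightarrow> nat \<Rightarrow> 'v) \<Rightarrow> real" where
  "quot_gauge st \<nu> S n A = Inf {\<nu> n B | B. B \<in> msa st n \<and> (\<lambda>i j. B i j - A i j) \<in> mats_in S n \<inter> msa st n}"

end

theory Submission
  imports Defs
begin

locale qctx =
  fixes sc :: "complex \<Rightarrow> 'v::real_vector \<Rightarrow> 'v"
    and st :: "'v \<Rightarrow> 'v"
    and \<nu> :: "nat \<Rightarrow> (nat \<Rightarrow> nat \<Rightarrow> 'v) \<Rightarrow> real"
    and S :: "'v set"
  assumes L: "LinfMOS sc st \<nu>"
    and I: "LinfMOS_ideal sc st \<nu> S"
begin

lemma SS: "star_space sc st" using L by (simp add: LinfMOS_def LinfMOS_mod_def)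
lemma modsc: "module sc" using SS by (simp add: star_space_def)
sublocale M: module sc by (rule modsc)
lemma st_add: "st (x + y) = st x + st y" using SS by (simp add: star_space_def)
sublocale ST: additive st by unfold_locales (rule st_add)
lemma st_sc: "st (sc c x) = sc (cnj c) (st x)" using SS by (simp add: star_space_def)
lemma st_st[simp]: "st (st x) = x" using SS by (simp add: star_space_def)
lemma scR: "sc (complex_of_real r) x = r *\<^sub>R x" using SS by (simp add: star_space_def)
lemma st_scaleR: "st (r *\<^sub>R x) = r *\<^sub>R st x" using st_sc[of "complex_of_real r" x] by (simp add: scR)

lemma nu_nonneg: "n \<ge> 1 \<Longrightarrow> A \<in> msa st n \<Longrightarrow> 0 \<le> \<nu> n A"
  using L unfolding LinfMOS_def LinfMOS_mod_def by blast
lemma nu_sub: "n \<ge> 1 \<Longrightarrow> A \<in> msa st n \<Longrightarrow> B \<in> msa st n \<Longrightarrow> \<nu> n (\<lambda>i j. A i j + B i j) \<le> \<nu> n A + \<nu> n B"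
  using L unfolding LinfMOS_def LinfMOS_mod_def by blast
lemma nu_hom: "n \<ge> 1 \<Longrightarrow> A \<in> msa st n \<Longrightarrow> t \<ge> 0 \<Longrightarrow> \<nu> n (\<lambda>i j. t *\<^sub>R A i j) = t * \<nu> n A"
  using L unfolding LinfMOS_def LinfMOS_mod_def by blast
lemma nu_congr: "n \<ge> 1 \<Longrightarrow> k \<ge> 1 \<Longrightarrow> A \<in> msa st n \<Longrightarrow> \<nu> k (congr sc n k X A) \<le> (opnorm n k X)\<^sup>2 * \<nu> n A"
  using L unfolding LinfMOS_def LinfMOS_mod_def by blast
lemma nu_dsum: "n \<ge> 1 \<Longrightarrow> k \<ge> 1 \<Longrightarrow> A \<in> msa st n \<Longrightarrow> B \<in> msa st k \<Longrightarrow> \<nu> (n + k) (dsum n k A B) = max (\<nu> n A) (\<nu> k B)"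
  using L unfolding LinfMOS_def LinfMOS_mod_def by blast

lemma Ssub: "sa_subspace sc st S" using I by (simp add: LinfMOS_ideal_def)
lemma GI: "gauge_ideal {x. st x = x} (\<lambda>x. \<nu> 1 (emb1 x)) (S \<inter> {x. st x = x})"
  using I by (simp add: LinfMOS_ideal_def)
lemma S0[simp]: "0 \<in> S" using Ssub by (simp add: sa_subspace_def)
lemma Sadd: "x \<in> S \<Longrightarrow> y \<in> S \<Longrightarrow> x + y \<in> S" using Ssub by (simp add: sa_subspace_def)
lemma Ssc: "x \<in> S \<Longrightarrow> sc c x \<in> S" using Ssub by (simp add: sa_subspace_def)
lemma Sneg: "x \<in> S \<Longrightarrow> - x \<in> S" using Ssc[of x "-1"] by simp
lemma Sdiff: "x \<in> S \<Longrightarrow> y \<in> S \<Longrightarrow> x - y \<in> S" using Sadd[OF _ Sneg, of x y] by simp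
lemma SscR: "x \<in> S \<Longrightarrow> r *\<^sub>R x \<in> S" using Ssc[of x "complex_of_real r"] by (simp add: scR)
lemma Ssum: "(\<And>i. i \<in> A \<Longrightarrow> f i \<in> S) \<Longrightarrow> sum f A \<in> S"
  by (induction A rule: infinite_finite_induct) (auto intro: Sadd)

lemma msa_iff: "A \<in> msa st n \<longleftrightarrow> A \<in> mats n \<and> (\<forall>i j. st (A j i) = A i j)"
  unfolding msa_def mstar_def by (auto simp: fun_eq_iff)
lemma mats_iff: "A \<in> mats n \<longleftrightarrow> (\<forall>i j. \<not> (i < n \<and> j < n) \<longrightarrow> A i j = 0)"
  by (simp add: mats_def)
lemma msa_add: "A \<in> msa st n \<Longrightarrow> B \<in> msa st n \<Longrightarrow> (\<lambda>i j. A i j + B i j) \<in> msa st n"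
  by (auto simp: msa_iff mats_iff st_add)
lemma msa_diff: "A \<in> msa st n \<Longrightarrow> B \<in> msa st n \<Longrightarrow> (\<lambda>i j. A i j - B i j) \<in> msa st n"
  by (auto simp: msa_iff mats_iff ST.diff)
lemma msa_neg: "A \<in> msa st n \<Longrightarrow> (\<lambda>i j. - A i j) \<in> msa st n"
  by (auto simp: msa_iff mats_iff ST.minus)
lemma msa_scaleR: "A \<in> msa st n \<Longrightarrow> (\<lambda>i j. t *\<^sub>R A i j) \<in> msa st n"
  by (auto simp: msa_iff mats_iff st_scaleR)
lemma msa_zero: "(\<lambda>i j. 0) \<in> msa st n"
  by (auto simp: msa_iff mats_iff ST.zero)

lemma mS_iff: "A \<in> mats_in S n \<longleftrightarrow> A \<in> mats n \<and> (\<forall>i j. A i j \<in> S)"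
  by (simp add: mats_in_def)

definition cos where "cos n A = {B. B \<in> msa st n \<and> (\<lambda>i j. B i j - A i j) \<in> mats_in S n \<inter> msa st n}"

lemma qg: "quot_gauge st \<nu> S n A = Inf (\<nu> n ` cos n A)"
  unfolding quot_gauge_def cos_def by (intro arg_cong[where f=Inf]) blast

lemma cos_iff: "A \<in> msa st n \<Longrightarrow> B \<in> cos n A \<longleftrightarrow> B \<in> msa st n \<and> (\<forall>i j. B i j - A i j \<in> S)"
  unfolding cos_def by (auto simp: msa_diff mS_iff msa_iff mats_iff ST.diff)

lemma self_cos: "A \<in> msa st n \<Longrightarrow> A \<in> cos n A"
  by (simp add: cos_iff)

lemma bdd: "n \<ge> 1 \<Longrightarrow> A \<in> msa st n \<Longrightarrow> bdd_below (\<nu> n ` cos n A)"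
  by (rule bdd_belowI[of _ 0]) (auto simp: cos_def intro: nu_nonneg)

lemma q_le: "n \<ge> 1 \<Longrightarrow> A \<in> msa st n \<Longrightarrow> B \<in> cos n A \<Longrightarrow> quot_gauge st \<nu> S n A \<le> \<nu> n B"
  unfolding qg by (rule cInf_lower) (auto intro: bdd)

lemma q_ge: "n \<ge> 1 \<Longrightarrow> A \<in> msa st n \<Longrightarrow> (\<And>B. B \<in> cos n A \<Longrightarrow> c \<le> \<nu> n B) \<Longrightarrow> c \<le> quot_gauge st \<nu> S n A"
  unfolding qg by (rule cInf_greatest) (auto dest: self_cos)

lemma q_lt: "n \<ge> 1 \<Longrightarrow> A \<in> msa st n \<Longrightarrow> quot_gauge st \<nu> S n A < e \<Longrightarrow> \<exists>B\<in>cos n A. \<nu> n B < e"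
  unfolding qg using cInf_lessD[of "\<nu> n ` cos n A" e] self_cos by blast

lemma q_nonneg: "n \<ge> 1 \<Longrightarrow> A \<in> msa st n \<Longrightarrow> 0 \<le> quot_gauge st \<nu> S n A"
  by (rule q_ge) (auto simp: cos_def intro: nu_nonneg)

end

context qctx
begin

lemma S_trans: "x - y \<in> S \<Longrightarrow> y - z \<in> S \<Longrightarrow> x - z \<in> S"
  using Sadd[of "x - y" "y - z"] by simp
lemma S_trans': "x - y \<in> S \<Longrightarrow> z - y \<in> S \<Longrightarrow> x - z \<in> S"
  using Sdiff[of "x - y" "z - y"] by simp
lemma S_add2: "x - y \<in> S \<Longrightarrow> z - w \<in> S \<Longrightarrow> (x + z) - (y + w) \<in> S"
  using Sadd[of "x - y" "z - w"] by (simp add: algebra_simps)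

lemma wd: "n \<ge> 1 \<Longrightarrow> A \<in> msa st n \<Longrightarrow> B \<in> msa st n \<Longrightarrow> (\<lambda>i j. A i j - B i j) \<in> mats_in S n
  \<Longrightarrow> quot_gauge st \<nu> S n A = quot_gauge st \<nu> S n B"
proof -
  assume A: "A \<in> msa st n" and B: "B \<in> msa st n" and D: "(\<lambda>i j. A i j - B i j) \<in> mats_in S n"
  have "cos n A = cos n B"
  proof (intro set_eqI iffI)
    fix C assume "C \<in> cos n A"
    then have "C \<in> msa st n" "\<forall>i j. C i j - A i j \<in> S" using A by (auto simp: cos_iff)
    then show "C \<in> cos n B" using D B by (simp add: cos_iff mS_iff) (blast intro: S_trans)
  next
    fix C assume "C \<in> cos n B"
    then have "C \<in> msa st n" "\<forall>i j. C i j - B i j \<in> S" using B by (auto simp: cos_iff)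
    then show "C \<in> cos n A" using D A by (simp add: cos_iff mS_iff) (blast intro: S_trans')
  qed
  then show ?thesis by (simp add: qg)
qed

lemma subadd: assumes n: "n \<ge> 1" and A: "A \<in> msa st n" and B: "B \<in> msa st n"
  shows "quot_gauge st \<nu> S n (\<lambda>i j. A i j + B i j) \<le> quot_gauge st \<nu> S n A + quot_gauge st \<nu> S n B"
proof -
  let ?q = "quot_gauge st \<nu> S n"
  have AB: "(\<lambda>i j. A i j + B i j) \<in> msa st n" using A B by (rule msa_add)
  have main: "?q (\<lambda>i j. A i j + B i j) \<le> \<nu> n A' + \<nu> n B'" if "A' \<in> cos n A" "B' \<in> cos n B" for A' B'
  proof -
    have A': "A' \<in> msa st n" "\<forall>i j. A' i j - A i j \<in> S" and B': "B' \<in> msa st n" "\<forall>i j. B' i j - B i j \<in> S"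
      using that A B by (auto simp: cos_iff)
    have "(\<lambda>i j. A' i j + B' i j) \<in> cos n (\<lambda>i j. A i j + B i j)"
      using A' B' AB by (auto simp: cos_iff intro!: msa_add S_add2)
    then have "?q (\<lambda>i j. A i j + B i j) \<le> \<nu> n (\<lambda>i j. A' i j + B' i j)" using q_le[OF n AB] by blast
    also have "\<dots> \<le> \<nu> n A' + \<nu> n B'" using nu_sub[OF n A'(1) B'(1)] .
    finally show ?thesis .
  qed
  have "?q (\<lambda>i j. A i j + B i j) - \<nu> n B' \<le> ?q A" if "B' \<in> cos n B" for B'
    using main that by (intro q_ge[OF n A]) (auto simp: algebra_simps)
  then have "?q (\<lambda>i j. A i j + B i j) - ?q A \<le> ?q B"
    by (intro q_ge[OF n B]) (auto simp: algebra_simps)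
  then show ?thesis by simp
qed

lemma homog: assumes n: "n \<ge> 1" and A: "A \<in> msa st n" and t: "t \<ge> 0"
  shows "quot_gauge st \<nu> S n (\<lambda>i j. t *\<^sub>R A i j) = t * quot_gauge st \<nu> S n A"
proof (cases "t = 0")
  case True
  have z: "(\<lambda>i j. 0 *\<^sub>R A i j) = (\<lambda>i j. 0)" by simp
  have "\<nu> n (\<lambda>i j. 0) = 0" using nu_hom[OF n A, of 0] by (simp add: z)
  moreover have "(\<lambda>i j. 0) \<in> cos n (\<lambda>i j. 0)" by (rule self_cos[OF msa_zero])
  ultimately have "quot_gauge st \<nu> S n (\<lambda>i j. 0) \<le> 0" using q_le[OF n msa_zero] by fastforce
  moreover have "0 \<le> quot_gauge st \<nu> S n (\<lambda>i j. 0)" by (rule q_nonneg[OF n msa_zero])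
  ultimately show ?thesis using True by (simp add: z)
next
  case False
  then have tp: "t > 0" using t by simp
  let ?q = "quot_gauge st \<nu> S n"
  have tA: "(\<lambda>i j. t *\<^sub>R A i j) \<in> msa st n" using A by (rule msa_scaleR)
  have "?q (\<lambda>i j. t *\<^sub>R A i j) / t \<le> ?q A"
  proof (rule q_ge[OF n A])
    fix A' assume "A' \<in> cos n A"
    then have A': "A' \<in> msa st n" "\<forall>i j. A' i j - A i j \<in> S" using A by (auto simp: cos_iff)
    have "t *\<^sub>R A' i j - t *\<^sub>R A i j = t *\<^sub>R (A' i j - A i j)" for i j by (simp add: algebra_simps)
    then have "(\<lambda>i j. t *\<^sub>R A' i j) \<in> cos n (\<lambda>i j. t *\<^sub>R A i j)"
      using A' tA by (auto simp: cos_iff intro!: msa_scaleR SscR)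
    then have "?q (\<lambda>i j. t *\<^sub>R A i j) \<le> \<nu> n (\<lambda>i j. t *\<^sub>R A' i j)" using q_le[OF n tA] by blast
    also have "\<dots> = t * \<nu> n A'" using nu_hom[OF n A'(1) t] .
    finally show "?q (\<lambda>i j. t *\<^sub>R A i j) / t \<le> \<nu> n A'" using tp by (simp add: field_simps)
  qed
  moreover have "t * ?q A \<le> ?q (\<lambda>i j. t *\<^sub>R A i j)"
  proof (rule q_ge[OF n tA])
    fix B assume "B \<in> cos n (\<lambda>i j. t *\<^sub>R A i j)"
    then have B: "B \<in> msa st n" "\<forall>i j. B i j - t *\<^sub>R A i j \<in> S" using tA by (auto simp: cos_iff)
    have "(1/t) *\<^sub>R B i j - A i j = (1/t) *\<^sub>R (B i j - t *\<^sub>R A i j)" for i j using tp by (simp add: algebra_simps)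
    then have "(\<lambda>i j. (1/t) *\<^sub>R B i j) \<in> cos n A"
      using B A by (auto simp: cos_iff intro!: msa_scaleR SscR)
    then have "?q A \<le> \<nu> n (\<lambda>i j. (1/t) *\<^sub>R B i j)" using q_le[OF n A] by blast
    also have "\<dots> = (1/t) * \<nu> n B" using nu_hom[OF n B(1)] tp by simp
    finally show "t * ?q A \<le> \<nu> n B" using tp by (simp add: field_simps)
  qed
  ultimately show ?thesis using tp by (simp add: field_simps)
qed

end


lemma opnorm_bound:
  assumes K: "0 \<le> K" and H: "\<And>v. vnorm k v \<le> 1 \<Longrightarrow> vnorm n (\<lambda>i. \<Sum>j<k. X i j * v j) \<le> K"
  shows "0 \<le> opnorm n k X" "opnorm n k X \<le> K"
proof -
  let ?T = "{vnorm n (\<lambda>i. \<Sum>j<k. X i j * v j) | v. vnorm k v \<le> 1}"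
  have bdd: "bdd_above ?T" using H by (auto intro!: bdd_aboveI[of _ K])
  have z: "0 \<in> ?T"
  proof -
    have "vnorm k (\<lambda>_. 0) \<le> 1" "vnorm n (\<lambda>i. \<Sum>j<k. X i j * (\<lambda>_. 0) j) = 0" by (simp_all add: vnorm_def)
    then show ?thesis by force
  qed
  show "0 \<le> opnorm n k X" unfolding opnorm_def using cSup_upper[OF z bdd] .
  show "opnorm n k X \<le> K" unfolding opnorm_def using H z by (intro cSup_least) auto
qed

definition Xm :: "nat \<Rightarrow> nat \<Rightarrow> nat \<Rightarrow> complex" where
  "Xm m p i = (if p = i + m then 1 else 0)"

lemma Xm_apply: "(\<Sum>j<r. Xm m i j * v j) = (if m \<le> i \<and> i < m + r then v (i - m) else 0)"
proof (cases "m \<le> i")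
  case True
  have "(\<Sum>j<r. Xm m i j * v j) = (\<Sum>j<r. if j = i - m then v j else 0)"
    using True by (intro sum.cong) (auto simp: Xm_def)
  also have "\<dots> = (if m \<le> i \<and> i < m + r then v (i - m) else 0)" using True by auto
  finally show ?thesis .
next
  case False
  then show ?thesis by (auto simp: Xm_def intro!: sum.neutral)
qed

lemma vnorm_Xm: assumes "m + r \<le> N" shows "vnorm N (\<lambda>i. \<Sum>j<r. Xm m i j * v j) = vnorm r v"
proof -
  have "(\<Sum>i<N. (cmod (\<Sum>j<r. Xm m i j * v j))\<^sup>2) = (\<Sum>i<N. if m \<le> i \<and> i < m + r then (cmod (v (i - m)))\<^sup>2 else 0)"
    by (intro sum.cong) (auto simp: Xm_apply)
  also have "\<dots> = (\<Sum>i\<in>{i\<in>{..<N}. m \<le> i \<and> i < m + r}. (cmod (v (i - m)))\<^sup>2)"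
    by (rule sum.inter_filter[symmetric]) simp
  also have "{i\<in>{..<N}. m \<le> i \<and> i < m + r} = {0 + m..<r + m}" using assms by auto
  also have "(\<Sum>i\<in>{0 + m..<r + m}. (cmod (v (i - m)))\<^sup>2) = (\<Sum>i\<in>{0..<r}. (cmod (v i))\<^sup>2)"
    by (subst sum.shift_bounds_nat_ivl) simp
  finally show ?thesis by (simp add: vnorm_def lessThan_atLeast0)
qed

lemma opnorm_Xm: assumes "m + r \<le> N" shows "(opnorm N r (Xm m))\<^sup>2 \<le> 1"
proof -
  have "0 \<le> opnorm N r (Xm m)" "opnorm N r (Xm m) \<le> 1"
    using opnorm_bound[of 1 r N "Xm m"] vnorm_Xm[OF assms] by auto
  then show ?thesis by (simp add: power_le_one)
qed

context qctx
begin

lemma sc_if: "sc (if P then a else b) x = (if P then sc a x else sc b x)" by simp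

lemma congr_Xm: assumes "m + r \<le> N"
  shows "congr sc N r (Xm m) C = (\<lambda>i j. if i < r \<and> j < r then C (i + m) (j + m) else 0)"
proof (intro ext)
  fix i j
  show "congr sc N r (Xm m) C i j = (if i < r \<and> j < r then C (i + m) (j + m) else 0)"
  proof (cases "i < r \<and> j < r")
    case True
    have "(\<Sum>p<N. \<Sum>q<N. sc (cnj (Xm m p i) * Xm m q j) (C p q))
        = (\<Sum>p<N. if p = i + m then (\<Sum>q<N. if q = j + m then C p q else 0) else 0)"
      by (intro sum.cong) (auto simp: Xm_def sc_if M.scale_one M.scale_zero_left cong: if_cong intro!: sum.cong sum.neutral)
    also have "\<dots> = C (i + m) (j + m)" using True assms by simp
    finally show ?thesis using True by (simp add: congr_def)
  qed (auto simp: congr_def)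
qed

lemma congr_msa: assumes A: "A \<in> msa st n" shows "congr sc n k X A \<in> msa st k"
proof -
  have sa: "st (A p q) = A q p" for p q using A by (simp add: msa_iff)
  have "st (congr sc n k X A j i) = congr sc n k X A i j" for i j
  proof (cases "i < k \<and> j < k")
    case True
    have "st (\<Sum>p<n. \<Sum>q<n. sc (cnj (X p j) * X q i) (A p q))
        = (\<Sum>p<n. \<Sum>q<n. sc (cnj (X q i) * X p j) (A q p))"
      by (simp add: ST.sum st_sc sa mult.commute)
    also have "\<dots> = (\<Sum>q<n. \<Sum>p<n. sc (cnj (X q i) * X p j) (A q p))" by (rule sum.swap)
    finally show ?thesis using True by (auto simp: congr_def)
  qed (auto simp: congr_def ST.zero)
  then show ?thesis by (auto simp: msa_iff mats_iff congr_def)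
qed

lemma congr_diff: "congr sc n k X (\<lambda>i j. B i j - A i j) = (\<lambda>i j. congr sc n k X B i j - congr sc n k X A i j)"
  by (auto simp: congr_def M.scale_right_diff_distrib sum_subtractf intro!: ext)

lemma congr_S: "(\<And>i j. M i j \<in> S) \<Longrightarrow> congr sc n k X M i j \<in> S"
  by (auto simp: congr_def intro!: Ssum Ssc)

lemma cong_part: assumes n: "n \<ge> 1" and k: "k \<ge> 1" and A: "A \<in> msa st n"
  shows "quot_gauge st \<nu> S k (congr sc n k X A) \<le> (opnorm n k X)\<^sup>2 * quot_gauge st \<nu> S n A"
proof -
  let ?c = "(opnorm n k X)\<^sup>2"
  have cA: "congr sc n k X A \<in> msa st k" using A by (rule congr_msa)
  have main: "quot_gauge st \<nu> S k (congr sc n k X A) \<le> ?c * \<nu> n B" if B: "B \<in> cos n A" for B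
  proof -
    have B': "B \<in> msa st n" "\<forall>i j. B i j - A i j \<in> S" using B A by (auto simp: cos_iff)
    have "congr sc n k X B \<in> cos k (congr sc n k X A)"
      using B' cA congr_S[of "\<lambda>i j. B i j - A i j" n k X]
      by (auto simp: cos_iff congr_msa congr_diff)
    then have "quot_gauge st \<nu> S k (congr sc n k X A) \<le> \<nu> k (congr sc n k X B)" using q_le[OF k cA] by blast
    also have "\<dots> \<le> ?c * \<nu> n B" using nu_congr[OF n k B'(1)] .
    finally show ?thesis .
  qed
  show ?thesis
  proof (cases "?c = 0")
    case True
    then show ?thesis using main[OF self_cos[OF A]] by simp
  next
    case False
    then have cp: "?c > 0" by simp
    have "quot_gauge st \<nu> S k (congr sc n k X A) / ?c \<le> quot_gauge st \<nu> S n A"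
      using main cp by (intro q_ge[OF n A]) (simp add: field_simps mult.commute)
    then show ?thesis using cp by (simp add: field_simps mult.commute)
  qed
qed

lemma dsum_msa: "A \<in> msa st n \<Longrightarrow> B \<in> msa st k \<Longrightarrow> dsum n k A B \<in> msa st (n + k)"
  by (auto simp: msa_iff mats_iff dsum_def ST.zero)

lemma dsum_part: assumes n: "n \<ge> 1" and k: "k \<ge> 1" and A: "A \<in> msa st n" and B: "B \<in> msa st k"
  shows "quot_gauge st \<nu> S (n + k) (dsum n k A B) = max (quot_gauge st \<nu> S n A) (quot_gauge st \<nu> S k B)"
proof -
  let ?q = "quot_gauge st \<nu> S"
  have nk: "n + k \<ge> 1" using n by simp
  have D: "dsum n k A B \<in> msa st (n + k)" using A B by (rule dsum_msa)
  have le1: "?q (n + k) (dsum n k A B) \<le> max (\<nu> n A') (\<nu> k B')" if A': "A' \<in> cos n A" and B': "B' \<in> cos k B" for A' B'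
  proof -
    have a: "A' \<in> msa st n" "\<forall>i j. A' i j - A i j \<in> S" using A' A by (auto simp: cos_iff)
    have b: "B' \<in> msa st k" "\<forall>i j. B' i j - B i j \<in> S" using B' B by (auto simp: cos_iff)
    have "dsum n k A' B' i j - dsum n k A B i j \<in> S" for i j using a b by (auto simp: dsum_def)
    then have "dsum n k A' B' \<in> cos (n + k) (dsum n k A B)"
      using dsum_msa[OF a(1) b(1)] D by (simp add: cos_iff)
    then have "?q (n + k) (dsum n k A B) \<le> \<nu> (n + k) (dsum n k A' B')" using q_le[OF nk D] by blast
    also have "\<dots> = max (\<nu> n A') (\<nu> k B')" using nu_dsum[OF n k a(1) b(1)] .
    finally show ?thesis .
  qed
  have "?q (n + k) (dsum n k A B) \<le> max (?q n A) (?q k B)"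
  proof (rule ccontr)
    assume "\<not> ?thesis"
    then have "?q n A < ?q (n + k) (dsum n k A B)" "?q k B < ?q (n + k) (dsum n k A B)" by auto
    then obtain A' B' where "A' \<in> cos n A" "\<nu> n A' < ?q (n + k) (dsum n k A B)"
      "B' \<in> cos k B" "\<nu> k B' < ?q (n + k) (dsum n k A B)"
      using q_lt[OF n A] q_lt[OF k B] by blast
    then show False using le1 by fastforce
  qed
  moreover have "max (?q n A) (?q k B) \<le> ?q (n + k) (dsum n k A B)"
  proof (rule q_ge[OF nk D])
    fix C assume C: "C \<in> cos (n + k) (dsum n k A B)"
    then have c: "C \<in> msa st (n + k)" "\<forall>i j. C i j - dsum n k A B i j \<in> S" using D by (auto simp: cos_iff)
    have nuC: "0 \<le> \<nu> (n + k) C" using nu_nonneg[OF nk c(1)] .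
    have Am: "A i j = 0" if "\<not> (i < n \<and> j < n)" for i j using A that by (simp add: msa_iff mats_iff)
    have Bm: "B i j = 0" if "\<not> (i < k \<and> j < k)" for i j using B that by (simp add: msa_iff mats_iff)
    have t1: "congr sc (n + k) n (Xm 0) C \<in> cos n A"
    proof -
      have "congr sc (n + k) n (Xm 0) C i j - A i j \<in> S" for i j
      proof (cases "i < n \<and> j < n")
        case True
        then show ?thesis using c(2)[rule_format, of i j] by (simp add: congr_Xm dsum_def)
      qed (auto simp: congr_Xm Am)
      then show ?thesis using A congr_msa[OF c(1)] by (simp add: cos_iff)
    qed
    have t2: "congr sc (n + k) k (Xm n) C \<in> cos k B"
    proof -
      have "congr sc (n + k) k (Xm n) C i j - B i j \<in> S" for i j
      proof (cases "i < k \<and> j < k")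
        case True
        then show ?thesis using c(2)[rule_format, of "i + n" "j + n"] by (simp add: congr_Xm dsum_def)
      qed (auto simp: congr_Xm Bm)
      then show ?thesis using B congr_msa[OF c(1)] by (simp add: cos_iff)
    qed
    have "?q n A \<le> \<nu> n (congr sc (n + k) n (Xm 0) C)" using q_le[OF n A t1] .
    also have "\<dots> \<le> (opnorm (n + k) n (Xm 0))\<^sup>2 * \<nu> (n + k) C" using nu_congr[OF nk n c(1)] .
    also have "\<dots> \<le> \<nu> (n + k) C" using opnorm_Xm[of 0 n "n + k"] nuC by (simp add: mult_left_le_one_le)
    finally have 1: "?q n A \<le> \<nu> (n + k) C" .
    have "?q k B \<le> \<nu> k (congr sc (n + k) k (Xm n) C)" using q_le[OF k B t2] .
    also have "\<dots> \<le> (opnorm (n + k) k (Xm n))\<^sup>2 * \<nu> (n + k) C" using nu_congr[OF nk k c(1)] .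
    also have "\<dots> \<le> \<nu> (n + k) C" using opnorm_Xm[of n k "n + k"] nuC by (simp add: mult_left_le_one_le)
    finally have 2: "?q k B \<le> \<nu> (n + k) C" .
    show "max (?q n A) (?q k B) \<le> \<nu> (n + k) C" using 1 2 by simp
  qed
  ultimately show ?thesis by linarith
qed

end


definition Xc :: "nat \<Rightarrow> nat \<Rightarrow> complex \<Rightarrow> complex \<Rightarrow> nat \<Rightarrow> nat \<Rightarrow> complex" where
  "Xc i k a b p j = (if p = i then a else 0) + (if p = k then b else 0)"

definition Ec :: "(complex \<Rightarrow> 'v::real_vector \<Rightarrow> 'v) \<Rightarrow> nat \<Rightarrow> nat \<Rightarrow> complex \<Rightarrow> complex \<Rightarrow> (nat \<Rightarrow> nat \<Rightarrow> 'v) \<Rightarrow> 'v" where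
  "Ec sc i k a b M = sc (cnj a * a) (M i i) + sc (cnj a * b) (M i k) + sc (cnj b * a) (M k i) + sc (cnj b * b) (M k k)"

lemma vnorm_le: assumes "\<And>p. cmod (w p) \<le> K0" "0 \<le> K0" shows "vnorm n w \<le> sqrt (real n) * K0"
proof -
  have "(\<Sum>p<n. (cmod (w p))\<^sup>2) \<le> (\<Sum>p<n. K0\<^sup>2)"
    using assms by (intro sum_mono power_mono) auto
  also have "\<dots> = real n * K0\<^sup>2" by simp
  finally have "vnorm n w \<le> sqrt (real n * K0\<^sup>2)" unfolding vnorm_def by (rule real_sqrt_le_mono)
  also have "\<dots> = sqrt (real n) * K0" using assms(2) by (simp add: real_sqrt_mult)
  finally show ?thesis .
qed

lemma opnorm_Xc: "(opnorm n 1 (Xc i k a b))\<^sup>2 \<le> (sqrt (real n) * (cmod a + cmod b))\<^sup>2"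
proof -
  let ?K = "sqrt (real n) * (cmod a + cmod b)"
  have K: "0 \<le> ?K" by simp
  have "vnorm n (\<lambda>p. \<Sum>j<1. Xc i k a b p j * v j) \<le> ?K" if v: "vnorm 1 v \<le> 1" for v
  proof (rule vnorm_le)
    have "vnorm 1 v = cmod (v 0)" by (simp add: vnorm_def)
    then have v0: "cmod (v 0) \<le> 1" using v by simp
    fix p
    have x: "cmod (Xc i k a b p 0) \<le> cmod a + cmod b"
      unfolding Xc_def by (rule order_trans[OF norm_triangle_ineq]) auto
    have "cmod (\<Sum>j<1. Xc i k a b p j * v j) = cmod (Xc i k a b p 0) * cmod (v 0)" by (simp add: norm_mult)
    also have "\<dots> \<le> (cmod a + cmod b) * 1" using x v0 by (intro mult_mono) auto
    finally show "cmod (\<Sum>j<1. Xc i k a b p j * v j) \<le> cmod a + cmod b" by simp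
  qed simp
  from opnorm_bound[OF K this] show ?thesis by (intro power_mono) auto
qed

context qctx
begin

lemma inner_Xc: assumes "i < n" "k < n"
  shows "(\<Sum>q<n. sc (Xc i k a b q 0 * c) (m q)) = sc (a * c) (m i) + sc (b * c) (m k)"
proof -
  have "(\<Sum>q<n. sc (Xc i k a b q 0 * c) (m q)) = (\<Sum>q<n. (if q = i then sc (a * c) (m q) else 0) + (if q = k then sc (b * c) (m q) else 0))"
    by (intro sum.cong) (auto simp: Xc_def distrib_right M.scale_left_distrib)
  also have "\<dots> = sc (a * c) (m i) + sc (b * c) (m k)" using assms by (simp add: sum.distrib)
  finally show ?thesis .
qed

lemma inner_Xc': assumes "i < n" "k < n"
  shows "(\<Sum>q<n. sc (c * Xc i k a b q 0) (m q)) = sc (c * a) (m i) + sc (c * b) (m k)"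
proof -
  have "(\<Sum>q<n. sc (c * Xc i k a b q 0) (m q)) = (\<Sum>q<n. (if q = i then sc (c * a) (m q) else 0) + (if q = k then sc (c * b) (m q) else 0))"
    by (intro sum.cong) (auto simp: Xc_def distrib_left M.scale_left_distrib)
  also have "\<dots> = sc (c * a) (m i) + sc (c * b) (m k)" using assms by (simp add: sum.distrib)
  finally show ?thesis .
qed

lemma congr_Xc: assumes "i < n" "k < n"
  shows "congr sc n 1 (Xc i k a b) M = emb1 (Ec sc i k a b M)"
proof (intro ext)
  fix r s
  have cX: "cnj (Xc i k a b p 0) = Xc i k (cnj a) (cnj b) p 0" for p by (simp add: Xc_def)
  have "(\<Sum>p<n. \<Sum>q<n. sc (cnj (Xc i k a b p 0) * Xc i k a b q 0) (M p q))
      = (\<Sum>p<n. sc (cnj (Xc i k a b p 0) * a) (M p i) + sc (cnj (Xc i k a b p 0) * b) (M p k))"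
    by (intro sum.cong refl) (rule inner_Xc'[OF assms])
  also have "\<dots> = (\<Sum>p<n. sc (Xc i k (cnj a) (cnj b) p 0 * a) (M p i)) + (\<Sum>p<n. sc (Xc i k (cnj a) (cnj b) p 0 * b) (M p k))"
    by (simp add: cX sum.distrib)
  also have "\<dots> = Ec sc i k a b M"
    unfolding inner_Xc[OF assms] Ec_def by (simp add: add_ac)
  finally show "congr sc n 1 (Xc i k a b) M r s = emb1 (Ec sc i k a b M) r s"
    by (auto simp: congr_def emb1_def)
qed

lemma Ec_diff: "Ec sc i k a b (\<lambda>r s. M r s - N r s) = Ec sc i k a b M - Ec sc i k a b N"
  by (simp add: Ec_def M.scale_right_diff_distrib algebra_simps)

lemma Ec_add: "Ec sc i k a b (\<lambda>r s. M r s + N r s) = Ec sc i k a b M + Ec sc i k a b N"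
  by (simp add: Ec_def M.scale_right_distrib algebra_simps)

lemma Ec_S: "(\<And>r s. M r s \<in> S) \<Longrightarrow> Ec sc i k a b M \<in> S"
  by (simp add: Ec_def Sadd Ssc)

lemma prop_key:
  assumes n: "n \<ge> 1" and A: "A \<in> msa st n" and q1: "quot_gauge st \<nu> S n A = 0"
    and q2: "quot_gauge st \<nu> S n (\<lambda>r s. - A r s) = 0" and ik: "i < n" "k < n"
  shows "Ec sc i k a b A \<in> S"
proof -
  let ?E = "Ec sc i k a b"
  let ?K = "(sqrt (real n) * (cmod a + cmod b))\<^sup>2"
  have one: "(1::nat) \<ge> 1" by simp
  have Esa: "st (?E M) = ?E M" if "M \<in> msa st n" for M
  proof -
    have "emb1 (?E M) \<in> msa st 1" using congr_msa[OF that, of 1 "Xc i k a b"] congr_Xc[OF ik] by simp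
    then have "\<forall>r s. st (emb1 (?E M) s r) = emb1 (?E M) r s" by (simp add: msa_iff)
    from this[rule_format, of 0 0] show ?thesis by (simp add: emb1_def)
  qed
  have gen: "\<nu> 1 (emb1 (?E M)) \<le> ?K * \<nu> n M" "0 \<le> \<nu> 1 (emb1 (?E M))" if M: "M \<in> msa st n" for M
  proof -
    have "\<nu> 1 (emb1 (?E M)) \<le> (opnorm n 1 (Xc i k a b))\<^sup>2 * \<nu> n M"
      using nu_congr[OF n one M, of "Xc i k a b"] congr_Xc[OF ik] by simp
    also have "\<dots> \<le> ?K * \<nu> n M" using opnorm_Xc nu_nonneg[OF n M] by (rule mult_right_mono)
    finally show "\<nu> 1 (emb1 (?E M)) \<le> ?K * \<nu> n M" .
    show "0 \<le> \<nu> 1 (emb1 (?E M))" using nu_nonneg[OF one congr_msa[OF M, of 1 "Xc i k a b"]] congr_Xc[OF ik] by simp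
  qed
  have nA: "(\<lambda>r s. - A r s) \<in> msa st n" using A by (rule msa_neg)
  have "\<forall>j. \<exists>B. B \<in> cos n A \<and> \<nu> n B < inverse (real (Suc j))"
  proof
    fix j :: nat
    have "0 < inverse (real (Suc j))" by simp
    then show "\<exists>B. B \<in> cos n A \<and> \<nu> n B < inverse (real (Suc j))"
      using q_lt[OF n A, of "inverse (real (Suc j))"] q1 by auto
  qed
  then obtain Bs where Bs: "\<And>j. Bs j \<in> cos n A" "\<And>j. \<nu> n (Bs j) < inverse (real (Suc j))"
    using choice[of "\<lambda>j B. B \<in> cos n A \<and> \<nu> n B < inverse (real (Suc j))"] by blast
  have "\<forall>j. \<exists>B. B \<in> cos n (\<lambda>r s. - A r s) \<and> \<nu> n B < inverse (real (Suc j))"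
  proof
    fix j :: nat
    have "0 < inverse (real (Suc j))" by simp
    then show "\<exists>B. B \<in> cos n (\<lambda>r s. - A r s) \<and> \<nu> n B < inverse (real (Suc j))"
      using q_lt[OF n nA, of "inverse (real (Suc j))"] q2 by auto
  qed
  then obtain Cs where Cs: "\<And>j. Cs j \<in> cos n (\<lambda>r s. - A r s)" "\<And>j. \<nu> n (Cs j) < inverse (real (Suc j))"
    using choice[of "\<lambda>j B. B \<in> cos n (\<lambda>r s. - A r s) \<and> \<nu> n B < inverse (real (Suc j))"] by blast
  have Bm: "Bs j \<in> msa st n" "\<forall>r s. Bs j r s - A r s \<in> S" for j using Bs(1)[of j] A by (auto simp: cos_iff)
  have Cm: "Cs j \<in> msa st n" "\<forall>r s. Cs j r s + A r s \<in> S" for j using Cs(1)[of j] nA by (auto simp: cos_iff)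
  have lim0: "(\<lambda>j. ?K * \<nu> n (X j)) \<longlonglongrightarrow> 0"
    if X: "\<And>j. X j \<in> msa st n" "\<And>j. \<nu> n (X j) < inverse (real (Suc j))" for X
  proof -
    have "(\<lambda>j. \<nu> n (X j)) \<longlonglongrightarrow> 0"
      by (rule tendsto_sandwich[OF _ _ tendsto_const LIMSEQ_inverse_real_of_nat])
         (use X(2) in \<open>auto intro!: always_eventually nu_nonneg[OF n X(1)] less_imp_le\<close>)
    then show ?thesis by (rule tendsto_mult_right_zero)
  qed
  have sq: "(\<lambda>j. \<nu> 1 (emb1 (?E (X j)))) \<longlonglongrightarrow> 0"
    if X: "\<And>j. X j \<in> msa st n" "\<And>j. \<nu> n (X j) < inverse (real (Suc j))" for X
    by (rule tendsto_sandwich[OF _ _ tendsto_const lim0[OF X]]) (use gen[OF X(1)] in \<open>auto intro!: always_eventually\<close>)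
  let ?a = "\<lambda>j. ?E (\<lambda>r s. A r s - Bs j r s)"
  let ?b = "\<lambda>j. ?E (\<lambda>r s. Cs j r s + A r s)"
  have aT: "?a j \<in> S \<inter> {x. st x = x}" for j
  proof -
    have "A r s - Bs j r s \<in> S" for r s using Sneg[OF Bm(2)[rule_format, of j r s]] by simp
    then show ?thesis using Esa[OF msa_diff[OF A Bm(1)]] by (auto intro: Ec_S)
  qed
  have bT: "?b j \<in> S \<inter> {x. st x = x}" for j
    using Esa[OF msa_add[OF Cm(1) A]] Cm(2) by (auto intro: Ec_S)
  have ea: "?E A - ?a j = ?E (Bs j)" for j by (simp add: Ec_diff)
  have eb: "?b j - ?E A = ?E (Cs j)" for j by (simp add: Ec_add)
  have "?E A \<in> S \<inter> {x. st x = x}"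
  proof (rule GI[unfolded gauge_ideal_def, rule_format])
    show "?E A \<in> {x. st x = x}" using Esa[OF A] by simp
    show "\<exists>a b. (\<forall>j. a j \<in> S \<inter> {x. st x = x} \<and> b j \<in> S \<inter> {x. st x = x}) \<and>
      (\<lambda>j. \<nu> 1 (emb1 (?E A - a j))) \<longlonglongrightarrow> 0 \<and> (\<lambda>j. \<nu> 1 (emb1 (b j - ?E A))) \<longlonglongrightarrow> 0"
      apply (rule exI[of _ ?a], rule exI[of _ ?b])
      using aT bT sq[of Bs, OF Bm(1) Bs(2)] sq[of Cs, OF Cm(1) Cs(2)] by (simp add: ea eb)
  qed
  then show ?thesis by simp
qed

lemma proper_part:
  assumes n: "n \<ge> 1" and A: "A \<in> msa st n" and q1: "quot_gauge st \<nu> S n A = 0"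
    and q2: "quot_gauge st \<nu> S n (\<lambda>r s. - A r s) = 0"
  shows "A \<in> mats_in S n"
proof -
  have "A i k \<in> S" for i k
  proof (cases "i < n \<and> k < n")
    case False
    then show ?thesis using A by (auto simp: msa_iff mats_iff)
  next
    case True
    then have ik: "i < n" "k < n" by auto
    note P = prop_key[OF n A q1 q2 ik]
    have e1: "A i i \<in> S" using P[of 1 0] by (simp add: Ec_def M.scale_one M.scale_zero_left)
    have e2: "A k k \<in> S" using P[of 0 1] by (simp add: Ec_def M.scale_one M.scale_zero_left)
    have e3: "A i i + A i k + A k i + A k k \<in> S" using P[of 1 1] by (simp add: Ec_def M.scale_one)
    have e4: "A i i + sc \<i> (A i k) - sc \<i> (A k i) + A k k \<in> S"
      using P[of 1 \<i>] by (simp add: Ec_def M.scale_one M.scale_minus_left)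
    have s: "A i k + A k i \<in> S"
      using Sdiff[OF Sdiff[OF e3 e1] e2] by (simp add: algebra_simps)
    have d0: "sc \<i> (A i k) - sc \<i> (A k i) \<in> S"
      using Sdiff[OF Sdiff[OF e4 e1] e2] by (simp add: algebra_simps)
    have "sc (- \<i>) (sc \<i> (A i k) - sc \<i> (A k i)) = A i k - A k i"
      by (simp add: M.scale_right_diff_distrib M.scale_one)
    then have d: "A i k - A k i \<in> S" using Ssc[OF d0, of "- \<i>"] by simp
    have "A i k = (1/2) *\<^sub>R ((A i k + A k i) + (A i k - A k i))"
      by (simp add: algebra_simps scaleR_2[symmetric])
    then show ?thesis using SscR[OF Sadd[OF s d]] by metis
  qed
  then show ?thesis using A by (simp add: mS_iff msa_iff)
qed

end

theorem theorem3p19: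
  fixes sc :: "complex \<Rightarrow> 'v::real_vector \<Rightarrow> 'v"
    and st :: "'v \<Rightarrow> 'v"
    and \<nu> :: "nat \<Rightarrow> (nat \<Rightarrow> nat \<Rightarrow> 'v) \<Rightarrow> real"
    and S :: "'v set"
  assumes "LinfMOS sc st \<nu>"
    and "LinfMOS_ideal sc st \<nu> S"
  shows "LinfMOS_mod sc st S (quot_gauge st \<nu> S)"
proof -
  interpret qctx sc st \<nu> S using assms by (rule qctx.intro)
  show ?thesis
    unfolding LinfMOS_mod_def
    by (intro conjI SS Ssub allI ballI impI; (elim conjE)?;
        auto intro: wd q_nonneg subadd homog proper_part cong_part dsum_part)
qed

end
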